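(* Let $\mathbb{S}^{n-1}$ be the unit sphere of $\mathbb{R}^n$ with round metric, Riemannian distance $d$ and volume $\mathrm{dVol}$, and let $c(x,y)=\frac12d^2(x,y)$. Let $\mu_0,\mu_1$ be probability measures on $\mathbb{S}^{n-1}$ and $\phi$ a c-convex potential with $G_{\phi\#}\mu_0=\mu_1$. Assume $\mu_1\ge m\,\mathrm{dVol}$ for some $m>0$ and that $\mu_0$ satisfies $\mathbf{B(n-1)}$. Then there exists $\sigma>0$, depending on $m$ and on $f$ in $\mathbf{B(n-1)}$, such that $d(x,y)\le\pi-\sigma$ for all $x\in\mathbb{S}^{n-1}$ and all $y\in G_\phi(x)$.
   Context: The c-transform of $\psi$ is $\psi^c(x)=\sup_y\{-c(x,y)-\psi(y)\}$; $\phi$ is c-convex if $\phi=\psi^c$ for some $\psi$. $G_\phi(x)=\{y:\phi(x)+\phi^c(y)=-c(x,y)\}$; $G_{\phi\#}\mu_0=\mu_1$ means $\mu_1(B)=\mu_0(G_\phi^{-1}(B))$ for Borel $B$. Condition $\mathbf{B(n-1)}$: there is $f:\mathbb{R}^+\to\mathbb{R}^+$ with $\lim_{\epsilon\to0}f(\epsilon)=0$ such that $\mu_0(B_\epsilon(x))\le f(\epsilon)\epsilon^{(n-1)(1-\frac1{n-1})}$ for all $\epsilon\ge0$, $x\in\mathbb{S}^{n-1}$, where $B_\epsilon(x)$ is a geodesic ball. *)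

theory Defs
  imports "HOL-Analysis.Analysis" "HOL-Probability.Probability"
begin

abbreviation S :: "'a::euclidean_space set" where
  "S \<equiv> sphere 0 1"

definition sdist :: "'a::euclidean_space \<Rightarrow> 'a \<Rightarrow> real" where
  "sdist x y = arccos (x \<bullet> y)"

definition cost :: "'a::euclidean_space \<Rightarrow> 'a \<Rightarrow> real" where
  "cost x y = (sdist x y)^2 / 2"

definition c_transform :: "('a::euclidean_space \<Rightarrow> real) \<Rightarrow> 'a \<Rightarrow> real" where
  "c_transform \<psi> x = (SUP y\<in>S. - cost x y - \<psi> y)"

definition c_convex :: "('a::euclidean_space \<Rightarrow> real) \<Rightarrow> bool" where
  "c_convex \<phi> \<longleftrightarrow> (\<exists>\<psi>. (\<forall>x\<in>S. bdd_above ((\<lambda>y. - cost x y - \<psi> y) ` S))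
                          \<and> (\<forall>x\<in>S. \<phi> x = c_transform \<psi> x))"

definition Gphi :: "('a::euclidean_space \<Rightarrow> real) \<Rightarrow> 'a \<Rightarrow> 'a set" where
  "Gphi \<phi> x = {y\<in>S. \<phi> x + c_transform \<phi> y = - cost x y}"

definition Gphi_preimage :: "('a::euclidean_space \<Rightarrow> real) \<Rightarrow> 'a set \<Rightarrow> 'a set" where
  "Gphi_preimage \<phi> B = {x\<in>S. Gphi \<phi> x \<inter> B \<noteq> {}}"

definition pushes_forward :: "('a::euclidean_space \<Rightarrow> real) \<Rightarrow> 'a measure \<Rightarrow> 'a measure \<Rightarrow> bool" where
  "pushes_forward \<phi> \<mu>0 \<mu>1 \<longleftrightarrow>
     (\<forall>B\<in>sets \<mu>1. Gphi_preimage \<phi> B \<in> sets \<mu>0 \<and>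
                   measure \<mu>1 B = measure \<mu>0 (Gphi_preimage \<phi> B))"

text \<open>Standard surface (Riemannian volume) measure of the unit sphere, via the cone formula
  Vol(A) = n * Lebesgue(cone over A).\<close>
definition sphere_vol :: "'a::euclidean_space set \<Rightarrow> real" where
  "sphere_vol A = real DIM('a) *
     measure lborel {z. z \<noteq> 0 \<and> norm z \<le> 1 \<and> z /\<^sub>R norm z \<in> A}"

definition gball :: "'a::euclidean_space \<Rightarrow> real \<Rightarrow> 'a set" where
  "gball x \<epsilon> = {y\<in>S. sdist x y < \<epsilon>}"

definition prob_on_sphere :: "'a::euclidean_space measure \<Rightarrow> bool" where
  "prob_on_sphere \<mu> \<longleftrightarrow> prob_space \<mu> \<and> sets \<mu> = sets (restrict_space borel S)"

text \<open>Condition B(n-1), with n = DIM('a):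
  mu0(B_eps(x)) <= f(eps) * eps^((n-1)(1 - 1/(n-1))), exponent = n-2.\<close>
definition condB :: "(real \<Rightarrow> real) \<Rightarrow> 'a::euclidean_space measure \<Rightarrow> bool" where
  "condB f \<mu>0 \<longleftrightarrow> (\<forall>\<epsilon>\<ge>0. \<forall>x\<in>S.
      measure \<mu>0 (gball x \<epsilon>) \<le> f \<epsilon> * \<epsilon> ^ (DIM('a) - 2))"

end

theory Submission imports Defs begin
lemma inner_S_bounds:
  fixes x y :: "'a::euclidean_space"
  assumes "x \<in> S" "y \<in> S"
  shows "-1 \<le> x \<bullet> y" "x \<bullet> y \<le> 1"
proof -
  have "\<bar>x \<bullet> y\<bar> \<le> norm x * norm y" by (rule Cauchy_Schwarz_ineq2)
  with assms show "-1 \<le> x \<bullet> y" "x \<bullet> y \<le> 1" by auto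
qed

lemma sdist_bounds:
  fixes x y :: "'a::euclidean_space"
  assumes "x \<in> S" "y \<in> S"
  shows "0 \<le> sdist x y" "sdist x y \<le> pi"
  using inner_S_bounds[OF assms] by (auto simp: sdist_def intro: arccos_lbound arccos_ubound)

lemma sdist_sym: "sdist x y = sdist y x"
  by (simp add: sdist_def inner_commute)

lemma cost_sym: "cost x y = cost y x"
  by (simp add: cost_def sdist_sym)

lemma sdist_antipode:
  fixes x y :: "'a::euclidean_space"
  assumes "x \<in> S" "y \<in> S"
  shows "sdist x (-y) = pi - sdist x y"
  using inner_S_bounds[OF assms] by (simp add: sdist_def arccos_minus)

lemma sdist_triangle:
  fixes x y z :: "'a::euclidean_space"
  assumes x: "x \<in> S" and y: "y \<in> S" and z: "z \<in> S"
  shows "sdist x z \<le> sdist x y + sdist y z"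
proof -
  define a where "a = sdist x y"
  define b where "b = sdist y z"
  have a: "0 \<le> a" "a \<le> pi" using sdist_bounds[OF x y] a_def by auto
  have b: "0 \<le> b" "b \<le> pi" using sdist_bounds[OF y z] b_def by auto
  show ?thesis
  proof (cases "a + b \<ge> pi")
    case True
    then show ?thesis using sdist_bounds[OF x z] a_def b_def by linarith
  next
    case False
    define p where "p = x \<bullet> y"
    define q where "q = y \<bullet> z"
    have p: "-1 \<le> p" "p \<le> 1" using inner_S_bounds[OF x y] p_def by auto
    have q: "-1 \<le> q" "q \<le> 1" using inner_S_bounds[OF y z] q_def by auto
    have ca: "cos a = p" "sin a = sqrt (1 - p^2)" using p by (auto simp: a_def sdist_def p_def sin_arccos)
    have cb: "cos b = q" "sin b = sqrt (1 - q^2)" using q by (auto simp: b_def sdist_def q_def sin_arccos)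
    define u where "u = x - p *\<^sub>R y"
    define w where "w = z - q *\<^sub>R y"
    have yy: "y \<bullet> y = 1" "x \<bullet> x = 1" "z \<bullet> z = 1" using x y z by (auto simp: dot_square_norm)
    have uw: "u \<bullet> w = x \<bullet> z - p * q"
      unfolding u_def w_def using yy by (simp add: inner_diff_left inner_diff_right p_def q_def inner_commute algebra_simps)
    have nu: "norm u = sqrt (1 - p^2)"
    proof -
      have "u \<bullet> u = 1 - p^2" unfolding u_def using yy
        by (simp add: inner_diff_left inner_diff_right p_def inner_commute algebra_simps power2_eq_square)
      then show ?thesis by (simp add: norm_eq_sqrt_inner)
    qed
    have nw: "norm w = sqrt (1 - q^2)"
    proof -
      have "w \<bullet> w = 1 - q^2" unfolding w_def using yy
        by (simp add: inner_diff_left inner_diff_right q_def inner_commute algebra_simps power2_eq_square)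
      then show ?thesis by (simp add: norm_eq_sqrt_inner)
    qed
    have "- (norm u * norm w) \<le> u \<bullet> w"
      using Cauchy_Schwarz_ineq2[of u w] by linarith
    then have key: "cos (a + b) \<le> x \<bullet> z"
      using uw nu nw ca cb by (simp add: cos_add)
    have "arccos (x \<bullet> z) \<le> arccos (cos (a + b))"
      by (rule arccos_le_arccos) (use key inner_S_bounds[OF x z] in auto)
    also have "\<dots> = a + b" using False a b by (intro arccos_cos) auto
    finally show ?thesis by (simp add: sdist_def a_def b_def)
  qed
qed

lemma phi_bdd_below:
  fixes \<phi> :: "'a::euclidean_space \<Rightarrow> real"
  assumes "c_convex \<phi>" "(x1::'a) \<in> S"
  shows "\<exists>K. \<forall>x\<in>S. \<phi> x \<ge> -K"
proof -
  obtain \<psi> where bdd: "\<forall>x\<in>S. bdd_above ((\<lambda>y. - cost x y - \<psi> y) ` S)"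
    and eq: "\<forall>x\<in>S. \<phi> x = c_transform \<psi> x"
    using assms(1) unfolding c_convex_def by blast
  have "\<forall>x\<in>S. \<phi> x \<ge> - (pi^2/2 + \<psi> x1)"
  proof
    fix x :: 'a assume x: "x \<in> S"
    have "- cost x x1 - \<psi> x1 \<le> c_transform \<psi> x"
      unfolding c_transform_def using bdd x assms(2) by (intro cSUP_upper) auto
    moreover have "cost x x1 \<le> pi^2/2"
      using sdist_bounds[OF x assms(2)] unfolding cost_def
      by (simp add: power_mono)
    ultimately show "\<phi> x \<ge> - (pi^2/2 + \<psi> x1)" using eq x by auto
  qed
  then show ?thesis by blast
qed

lemma cost_nonneg: "cost x y \<ge> 0"
  by (simp add: cost_def)

lemma two_point:
  fixes \<phi> :: "'a::euclidean_space \<Rightarrow> real"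
  assumes cc: "c_convex \<phi>" and x0: "x0 \<in> S" and x: "x \<in> S"
    and g0: "y0 \<in> Gphi \<phi> x0" and g: "y \<in> Gphi \<phi> x"
  shows "cost x y + cost x0 y0 \<le> cost x y0 + cost x0 y"
proof -
  obtain K where K: "\<forall>x\<in>S. \<phi> x \<ge> -K" using phi_bdd_below[OF cc x0] by blast
  have bdd: "bdd_above ((\<lambda>x'. - cost z x' - \<phi> x') ` S)" for z :: 'a
  proof (rule bdd_aboveI2)
    fix x' :: 'a assume "x' \<in> S"
    then show "- cost z x' - \<phi> x' \<le> K" using K cost_nonneg[of z x'] by force
  qed
  have y0: "y0 \<in> S" and e0: "\<phi> x0 + c_transform \<phi> y0 = - cost x0 y0" using g0 by (auto simp: Gphi_def)
  have y: "y \<in> S" and e: "\<phi> x + c_transform \<phi> y = - cost x y" using g by (auto simp: Gphi_def)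
  have i0: "- cost y0 x - \<phi> x \<le> c_transform \<phi> y0"
    unfolding c_transform_def using bdd x by (intro cSUP_upper) auto
  have i1: "- cost y x0 - \<phi> x0 \<le> c_transform \<phi> y"
    unfolding c_transform_def using bdd x0 by (intro cSUP_upper) auto
  show ?thesis using i0 i1 e e0 cost_sym[of y0 x] cost_sym[of y x0] by linarith
qed

lemma geom:
  fixes x0 y0 x y :: "'a::euclidean_space"
  assumes S: "x0 \<in> S" "y0 \<in> S" "x \<in> S" "y \<in> S"
    and ineq: "cost x y + cost x0 y0 \<le> cost x y0 + cost x0 y"
  shows "sdist (-y0) x * sdist y y0 \<le> (pi - sdist x0 y0) * (2*pi - sdist y y0)"
proof -
  define r where "r = sdist (-y0) x"
  define t where "t = sdist y y0"
  define \<delta> where "\<delta> = pi - sdist x0 y0"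
  define d where "d = sdist x y"
  define e where "e = sdist x0 y"
  have my0: "-y0 \<in> S" and mx0: "-x0 \<in> S" using S by auto
  have h1: "sdist x y0 = pi - r"
    using sdist_antipode[OF S(3) S(2)] sdist_sym[of x "-y0"] r_def by simp
  have h2: "sdist y (-y0) = pi - t"
    using sdist_antipode[OF S(4) S(2)] t_def by simp
  have tr1: "sdist y (-y0) \<le> sdist y x + sdist x (-y0)" by (rule sdist_triangle[OF S(4) S(3) my0])
  have tr2: "sdist x (-y0) \<le> sdist x y + sdist y (-y0)" by (rule sdist_triangle[OF S(3) S(4) my0])
  have h3: "\<bar>pi - t - r\<bar> \<le> d"
    using tr1 tr2 h2 sdist_sym[of y x] sdist_sym[of x "-y0"] r_def d_def by auto
  have tr3: "sdist y y0 \<le> sdist y (-x0) + sdist (-x0) y0" by (rule sdist_triangle[OF S(4) mx0 S(2)])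
  have a1: "sdist y (-x0) = pi - e"
    using sdist_antipode[OF S(4) S(1)] sdist_sym[of y x0] e_def by simp
  have a2: "sdist (-x0) y0 = \<delta>"
    using sdist_antipode[OF S(2) S(1)] sdist_sym[of "-x0" y0] sdist_sym[of y0 x0] \<delta>_def by simp
  have h4: "e \<le> pi - t + \<delta>" using tr3 a1 a2 t_def by simp
  have e0: "0 \<le> e" using sdist_bounds[OF S(1) S(4)] e_def by simp
  have d0: "0 \<le> d" using sdist_bounds[OF S(3) S(4)] d_def by simp
  have sq1: "(pi - t - r)^2 \<le> d^2"
    using h3 d0 by (metis abs_le_square_iff abs_of_nonneg power2_abs)
  have sq2: "e^2 \<le> (pi - t + \<delta>)^2" using h4 e0 by (intro power_mono) auto
  have main: "d^2 + (pi - \<delta>)^2 \<le> (pi - r)^2 + e^2"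
    using ineq h1 unfolding cost_def d_def e_def \<delta>_def by simp
  have "(pi - t - r)^2 \<le> (pi - r)^2 + (pi - t + \<delta>)^2 - (pi - \<delta>)^2"
    using sq1 sq2 main by linarith
  then have "r * t \<le> \<delta> * (2*pi - t)"
    by (simp add: power2_eq_square algebra_simps)
  then show ?thesis by (simp add: r_def t_def \<delta>_def)
qed

lemma gball_eq:
  fixes z :: "'a::euclidean_space"
  assumes z: "z \<in> S" and e: "0 < \<epsilon>" "\<epsilon> \<le> pi"
  shows "gball z \<epsilon> = S \<inter> {y. cos \<epsilon> < z \<bullet> y}"
proof -
  have "arccos (z \<bullet> y) < \<epsilon> \<longleftrightarrow> cos \<epsilon> < z \<bullet> y" if y: "y \<in> S" for y
  proof -
    have b: "\<bar>z \<bullet> y\<bar> \<le> 1" using inner_S_bounds[OF z y] by auto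
    have "arccos (z \<bullet> y) < arccos (cos \<epsilon>) \<longleftrightarrow> cos \<epsilon> < z \<bullet> y"
      using b by (intro arccos_less_mono) auto
    with arccos_cos[of \<epsilon>] e show ?thesis by simp
  qed
  then show ?thesis by (auto simp: gball_def sdist_def)
qed

lemma in_restrict_borel:
  assumes "A \<in> sets borel"
  shows "S \<inter> A \<in> sets (restrict_space borel S)"
  using assms by (auto simp: sets_restrict_space)

theorem proposition5p2:
  fixes m :: real and f :: "real \<Rightarrow> real"
  assumes dim: "DIM('a::euclidean_space) \<ge> 2"
    and m_pos: "m > 0"
    and f_nonneg: "\<forall>\<epsilon>\<ge>0. f \<epsilon> \<ge> 0"
    and f_lim: "(f \<longlongrightarrow> 0) (at_right 0)"
  shows "\<exists>\<sigma>>0. \<forall>(\<mu>0::'a measure) \<mu>1 \<phi>.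
           prob_on_sphere \<mu>0 \<and> prob_on_sphere \<mu>1 \<and> c_convex \<phi> \<and>
           pushes_forward \<phi> \<mu>0 \<mu>1 \<and>
           (\<forall>A\<in>sets \<mu>1. measure \<mu>1 A \<ge> m * sphere_vol A) \<and>
           condB f \<mu>0
           \<longrightarrow> (\<forall>x\<in>S. \<forall>y\<in>Gphi \<phi> x. sdist x y \<le> pi - \<sigma>)"
proof -
  define V where "V = (1/4::real) ^ DIM('a) * measure lborel (ball (0::'a) 1)"
  have Vpos: "V > 0" unfolding V_def using content_ball_pos[of 1 "0::'a"] by simp
  have mV: "m * V > 0" using m_pos Vpos by simp
  have "\<forall>\<^sub>F e in at_right 0. f e < m * V"
    using order_tendstoD(2)[OF f_lim mV] .
  then obtain b where b: "b > 0" "\<And>e. 0 < e \<Longrightarrow> e < b \<Longrightarrow> f e < m * V"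
    unfolding eventually_at_right[OF zero_less_one] by auto
  define \<epsilon> where "\<epsilon> = min b 1 / 2"
  have eps: "0 < \<epsilon>" "\<epsilon> < b" "\<epsilon> \<le> 1/2" using b unfolding \<epsilon>_def by auto
  have f_eps: "f \<epsilon> < m * V" using b(2) eps by auto
  have pi_gt: "pi > 3" by (rule pi_gt3)
  define \<sigma> where "\<sigma> = \<epsilon> / 4"
  have \<sigma>pos: "\<sigma> > 0" using eps \<sigma>_def by simp
  show ?thesis
  proof (intro exI[of _ \<sigma>] conjI \<sigma>pos allI impI ballI)
    fix \<mu>0 \<mu>1 :: "'a measure" and \<phi> :: "'a \<Rightarrow> real" and x0 y0 :: 'a
    assume H: "prob_on_sphere \<mu>0 \<and> prob_on_sphere \<mu>1 \<and> c_convex \<phi> \<and>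
           pushes_forward \<phi> \<mu>0 \<mu>1 \<and>
           (\<forall>A\<in>sets \<mu>1. measure \<mu>1 A \<ge> m * sphere_vol A) \<and> condB f \<mu>0"
      and x0: "x0 \<in> S" and g0: "y0 \<in> Gphi \<phi> x0"
    have P0: "prob_space \<mu>0" "sets \<mu>0 = sets (restrict_space borel S)"
      and P1: "prob_space \<mu>1" "sets \<mu>1 = sets (restrict_space borel S)"
      using H by (auto simp: prob_on_sphere_def)
    have cc: "c_convex \<phi>" and pf: "pushes_forward \<phi> \<mu>0 \<mu>1"
      and lb: "\<forall>A\<in>sets \<mu>1. measure \<mu>1 A \<ge> m * sphere_vol A" and cB: "condB f \<mu>0"
      using H by auto
    have y0: "y0 \<in> S" using g0 by (auto simp: Gphi_def)
    show "sdist x0 y0 \<le> pi - \<sigma>"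
    proof (rule ccontr)
      assume "\<not> ?thesis"
      then have \<delta>small: "pi - sdist x0 y0 < \<sigma>" by simp
      have \<delta>nn: "0 \<le> pi - sdist x0 y0" using sdist_bounds[OF x0 y0] by simp
      define B where "B = S \<inter> {y. y0 \<bullet> y \<le> 0}"
      have B1: "B \<in> sets \<mu>1" unfolding B_def P1
        by (intro in_restrict_borel borel_closed closed_halfspace_le)
      have sub: "Gphi_preimage \<phi> B \<subseteq> gball (-y0) \<epsilon>"
      proof
        fix x assume "x \<in> Gphi_preimage \<phi> B"
        then obtain y where x: "x \<in> S" and g: "y \<in> Gphi \<phi> x" and yB: "y \<in> B"
          by (auto simp: Gphi_preimage_def)
        have y: "y \<in> S" using g by (auto simp: Gphi_def)
        have t: "sdist y y0 \<ge> pi/2"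
        proof -
          have "y \<bullet> y0 \<le> 0" using yB by (auto simp: B_def inner_commute)
          then have "arccos 0 \<le> arccos (y \<bullet> y0)"
            using inner_S_bounds[OF y y0] by (intro arccos_le_arccos) auto
          then show ?thesis by (simp add: sdist_def)
        qed
        have tpi: "sdist y y0 \<le> pi" using sdist_bounds[OF y y0] by simp
        have r0: "0 \<le> sdist (-y0) x" using sdist_bounds[of "-y0" x] x y0 by simp
        have G: "sdist (-y0) x * sdist y y0 \<le> (pi - sdist x0 y0) * (2*pi - sdist y y0)"
          by (rule geom[OF x0 y0 x y two_point[OF cc x0 x g0 g]])
        have "sdist (-y0) x * (pi/2) \<le> sdist (-y0) x * sdist y y0"
          using t r0 by (intro mult_left_mono) auto
        also have "\<dots> \<le> (pi - sdist x0 y0) * (2*pi - sdist y y0)" by (rule G)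
        also have "\<dots> \<le> (pi - sdist x0 y0) * (3 * (pi/2))"
          using t \<delta>nn by (intro mult_left_mono) auto
        finally have "sdist (-y0) x \<le> 3 * (pi - sdist x0 y0)"
          using pi_gt_zero by (simp add: mult.commute)
        also have "\<dots> < \<epsilon>" using \<delta>small \<delta>nn unfolding \<sigma>_def by argo
        finally show "x \<in> gball (-y0) \<epsilon>" using x by (simp add: gball_def)
      qed
      have geq: "gball (-y0) \<epsilon> = S \<inter> {y. cos \<epsilon> < (-y0) \<bullet> y}"
        by (rule gball_eq) (use y0 eps pi_gt in auto)
      have gb0: "gball (-y0) \<epsilon> \<in> sets \<mu>0"
        unfolding P0 geq by (intro in_restrict_borel borel_open open_halfspace_gt)
      have pre0: "Gphi_preimage \<phi> B \<in> sets \<mu>0" and eqm: "measure \<mu>1 B = measure \<mu>0 (Gphi_preimage \<phi> B)"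
        using pf B1 by (auto simp: pushes_forward_def)
      have "measure \<mu>0 (Gphi_preimage \<phi> B) \<le> measure \<mu>0 (gball (-y0) \<epsilon>)"
        using prob_space.finite_measure[OF P0(1)] sub gb0 by (intro finite_measure.finite_measure_mono) auto
      also have "\<dots> \<le> f \<epsilon> * \<epsilon> ^ (DIM('a) - 2)"
        using cB eps y0 by (auto simp: condB_def)
      also have "\<dots> \<le> f \<epsilon>"
      proof -
        have "\<epsilon> ^ (DIM('a) - 2) \<le> 1" using eps by (intro power_le_one) auto
        moreover have "f \<epsilon> \<ge> 0" using f_nonneg eps by auto
        ultimately show ?thesis by (simp add: mult_left_le)
      qed
      finally have up: "measure \<mu>1 B < m * V" using eqm f_eps by linarith
      define C where "C = {z::'a. z \<noteq> 0 \<and> norm z \<le> 1 \<and> z /\<^sub>R norm z \<in> B}"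
      have Ceq: "C = (- {0}) \<inter> cball 0 1 \<inter> {z. y0 \<bullet> z \<le> 0}"
      proof -
        have "z /\<^sub>R norm z \<in> B \<longleftrightarrow> y0 \<bullet> z \<le> 0" if "z \<noteq> 0" for z :: 'a
        proof -
          have "norm z > 0" using that by simp
          then have "y0 \<bullet> (z /\<^sub>R norm z) \<le> 0 \<longleftrightarrow> y0 \<bullet> z \<le> 0"
            by (simp add: mult_le_0_iff)
          moreover have "z /\<^sub>R norm z \<in> S" using that by (simp)
          ultimately show ?thesis by (auto simp: B_def)
        qed
        then show ?thesis by (auto simp: C_def)
      qed
      have Csets: "C \<in> sets lborel" unfolding Ceq
        by (intro sets.Int borel_open borel_closed open_Compl closed_halfspace_le) auto
      have Cfm: "C \<in> fmeasurable lborel"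
      proof (rule fmeasurableI)
        show "C \<in> sets lborel" by (rule Csets)
        have "emeasure lborel C \<le> emeasure lborel (ball (0::'a) 2)"
          by (rule emeasure_mono) (auto simp: Ceq)
        also have "\<dots> < \<infinity>" by (rule emeasure_lborel_ball_finite)
        finally show "emeasure lborel C < \<infinity>" .
      qed
      define c where "c = - (1/2) *\<^sub>R y0"
      have ballsub: "ball c (1/4) \<subseteq> C"
      proof
        fix z assume z: "z \<in> ball c (1/4)"
        have ny0: "norm y0 = 1" using y0 by simp
        have nc: "norm c = 1/2" using ny0 by (simp add: c_def)
        have dz: "norm (z - c) < 1/4" using z by (simp add: dist_norm norm_minus_commute)
        have "norm z \<le> norm c + norm (z - c)" by (metis add.commute diff_add_cancel norm_triangle_ineq)
        then have nz: "norm z \<le> 1" using nc dz by simp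
        have "y0 \<bullet> z = y0 \<bullet> c + y0 \<bullet> (z - c)" by (simp add: inner_diff_right)
        moreover have "y0 \<bullet> c = - 1/2" using y0 by (simp add: c_def dot_square_norm)
        moreover have "\<bar>y0 \<bullet> (z - c)\<bar> \<le> norm (z - c)" using Cauchy_Schwarz_ineq2[of y0 "z - c"] ny0 by simp
        ultimately have "y0 \<bullet> z < 0" using dz by linarith
        then show "z \<in> C" using nz unfolding Ceq by auto
      qed
      have "measure lborel (ball c (1/4)) = V"
        unfolding V_def by (subst content_ball_conv_unit_ball) auto
      then have "V \<le> measure lborel C"
        using ballsub Cfm by (metis measure_mono_fmeasurable sets_lborel borel_open open_ball)
      moreover have "real DIM('a) \<ge> 1" using dim by simp
      ultimately have "V \<le> sphere_vol B"
        unfolding sphere_vol_def C_def[symmetric] using Vpos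
        by (metis dual_order.trans less_le_not_le mult_le_cancel_right1 mult.commute mult_left_mono)
      then have "m * V \<le> measure \<mu>1 B"
        using lb B1 m_pos by (meson dual_order.trans mult_left_mono less_imp_le)
      with up show False by simp
    qed
  qed
qed

end
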